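(* Let $B>0$ and let $(\sigma_j)_{j\ge1}$ be positive numbers with $\sigma_j\le B/2$ for all $j$ and $\sum_{j}\sigma_j^2=\infty$. Consider the random-walk adversary that draws every loss $\ell_{j,i}$ independently and uniformly from $\{-\sigma_j,\sigma_j\}$. There is an explicit constant $\epsilon_0>0$ such that for any algorithm and any $0<\epsilon<\epsilon_0$, there exist $N=N(\epsilon)=\Theta(1/\epsilon^2)$ and $T=T(\epsilon)$ such that, in the experts game with $N$ experts played against this adversary, $$\frac{\mathbb{E}[\mathrm{Regret}_\epsilon(T)]}{\sqrt{\sum_{j=1}^T\sigma_j^2}}\ge\sqrt{2\log(1/\epsilon)}-6.$$
   Context: Experts game with $N$ experts: in each round $j$ the algorithm chooses $\boldsymbol p_j\in\Delta^{N-1}$ (depending only on past losses), then the loss vector $\boldsymbol\ell_j\in\mathbb{R}^N$ is revealed. The regret vector is $\boldsymbol x_T=\sum_{j=1}^T(\langle\boldsymbol p_j,\boldsymbol\ell_j\rangle\mathbf 1-\boldsymbol\ell_j)$ and $\mathrm{Regret}_\epsilon(T)=x_{T,(\lfloor N\epsilon\rfloor)}$, the $\lfloor N\epsilon\rfloor$-th largest coordinate of $\boldsymbol x_T$. The expectation is over the random losses (and any internal randomness). *)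

theory Defs
  imports "HOL-Probability.Probability"
begin

text \<open>A loss sequence is a function L :: nat \<times> nat \<Rightarrow> real, where L (j, i) is the loss of
  expert i (0 \<le> i < N) in round j (j \<ge> 1). A (deterministic) algorithm for N experts is a
  function alg :: nat \<Rightarrow> (nat \<times> nat \<Rightarrow> real) \<Rightarrow> nat \<Rightarrow> real, where alg j L i is the weight
  p_{j,i} put on expert i in round j; it may depend only on the losses of rounds before j.\<close>

definition valid_algorithm :: "nat \<Rightarrow> (nat \<Rightarrow> (nat \<times> nat \<Rightarrow> real) \<Rightarrow> nat \<Rightarrow> real) \<Rightarrow> bool" where
  "valid_algorithm N alg \<longleftrightarrow>
     (\<forall>j L. (\<forall>i<N. alg j L i \<ge> 0) \<and> (\<Sum>i<N. alg j L i) = 1) \<and>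
     (\<forall>j L L'. (\<forall>j'<j. \<forall>i. L (j', i) = L' (j', i)) \<longrightarrow> alg j L = alg j L')"

definition regret_vec ::
  "nat \<Rightarrow> (nat \<Rightarrow> (nat \<times> nat \<Rightarrow> real) \<Rightarrow> nat \<Rightarrow> real) \<Rightarrow> nat \<Rightarrow> (nat \<times> nat \<Rightarrow> real) \<Rightarrow> nat \<Rightarrow> real" where
  "regret_vec N alg T L i = (\<Sum>j=1..T. (\<Sum>k<N. alg j L k * L (j, k)) - L (j, i))"

definition kth_largest :: "nat \<Rightarrow> nat \<Rightarrow> (nat \<Rightarrow> real) \<Rightarrow> real" where
  "kth_largest N k x = rev (sort (map x [0..<N])) ! (k - 1)"

definition regret_eps ::
  "nat \<Rightarrow> (nat \<Rightarrow> (nat \<times> nat \<Rightarrow> real) \<Rightarrow> nat \<Rightarrow> real) \<Rightarrow> nat \<Rightarrow> real \<Rightarrow> (nat \<times> nat \<Rightarrow> real) \<Rightarrow> real" where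
  "regret_eps N alg T \<epsilon> L = kth_largest N (nat \<lfloor>real N * \<epsilon>\<rfloor>) (regret_vec N alg T L)"

definition random_walk_losses :: "(nat \<Rightarrow> real) \<Rightarrow> nat \<Rightarrow> nat \<Rightarrow> (nat \<times> nat \<Rightarrow> real) pmf" where
  "random_walk_losses \<sigma> N T =
     Pi_pmf ({1..T} \<times> {..<N}) 0 (\<lambda>(j, i). pmf_of_set {- \<sigma> j, \<sigma> j})"

end

theory Submission
  imports Defs
begin


definition ch :: "real \<Rightarrow> real" where "ch z = (exp z + exp (-z)) / 2"

lemma ch_le: "ch z \<le> exp (z^2/2)"
proof -
  have main: "ch l \<le> exp (l^2/2)" if l: "l > 0" for l
  proof -
    interpret interval_bounded_random_variable "measure_pmf (pmf_of_set {-1,1::real})" "\<lambda>x. x" "-1" "1"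
      by unfold_locales (auto simp: AE_measure_pmf_iff)
    have E0: "measure_pmf.expectation (pmf_of_set {-1,1::real}) (\<lambda>x. x) = 0" by (simp add: integral_pmf_of_set)
    have "nn_integral (measure_pmf (pmf_of_set {-1,1::real})) (\<lambda>x. exp (l * x)) \<le> ennreal (exp (l\<^sup>2 * (1 - (-1))\<^sup>2 / 8))"
      by (rule Hoeffdings_lemma_nn_integral_0[OF l E0])
    also have "nn_integral (measure_pmf (pmf_of_set {-1,1::real})) (\<lambda>x. exp (l * x)) = ennreal (ch l)"
    proof -
      have "nn_integral (measure_pmf (pmf_of_set {-1,1::real})) (\<lambda>x. exp (l * x)) = (\<Sum>x\<in>{-1,1::real}. ennreal (exp (l*x))) / 2"
        by (subst nn_integral_pmf_of_set) auto
      also have "(\<Sum>x\<in>{-1,1::real}. ennreal (exp (l*x))) = ennreal (exp (-l) + exp l)"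
        by (simp add: ennreal_plus)
      also have "\<dots> / 2 = ennreal ((exp (-l) + exp l) / 2)"
        by (intro ennreal_divide_numeral) (auto intro: add_nonneg_nonneg)
      finally show ?thesis by (simp add: ch_def add.commute)
    qed
    finally show ?thesis by (simp add: power2_eq_square)
  qed
  consider "z > 0" | "z = 0" | "z < 0" by linarith
  then show ?thesis
  proof cases
    case 3 then show ?thesis using main[of "-z"] by (simp add: ch_def add.commute)
  next
    case 1 then show ?thesis by (rule main)
  qed (auto simp: ch_def)
qed

lemma ch_ge: "1 + z^2/2 \<le> ch z"
proof -
  have main: "1 + u^2/2 \<le> ch u" if u: "u \<ge> 0" for u :: real
  proof -
    define r where "r = u/2"
    have v: "r \<ge> 0" using u by (simp add: r_def)
    define q where "q = 1 + r + r^2/2"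
    define w where "w = exp r"
    have q1: "q \<ge> 1" using v by (simp add: q_def)
    have wq: "w \<ge> q" using exp_lower_Taylor_quadratic[OF v] by (simp add: q_def w_def)
    have w0: "w > 0" by (simp add: w_def)
    have "q - 1/q \<le> w - 1/w"
    proof -
      have "1/w \<le> 1/q" using wq q1 by (intro divide_left_mono) auto
      then show ?thesis using wq by linarith
    qed
    moreover have "2*r \<le> q - 1/q"
    proof -
      have "q*q - 2*r*q - 1 = r^4/4" by (simp add: q_def power2_eq_square power4_eq_xxxx algebra_simps)
      moreover have "r^4/4 \<ge> 0" by simp
      ultimately have "q*q - 2*r*q - 1 \<ge> 0" by linarith
      hence "(q*q - 2*r*q - 1)/q \<ge> 0" using q1 by simp
      moreover have "(q*q - 2*r*q - 1)/q = q - 2*r - 1/q" using q1 by (simp add: field_simps)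
      ultimately show ?thesis by linarith
    qed
    ultimately have h: "2*r \<le> w - 1/w" by linarith
    have "(2*r)^2 \<le> (w - 1/w)^2" using h v by (intro power_mono) auto
    moreover have "exp u = w^2" by (simp add: w_def r_def flip: exp_of_nat_mult)
    moreover have "exp (-u) = 1/w^2" by (simp add: w_def r_def exp_minus inverse_eq_divide flip: exp_of_nat_mult) 
    ultimately have "ch u = 1 + (w - 1/w)^2/2" using w0 by (simp add: ch_def power2_eq_square field_simps)
    moreover have "(2*r)^2 = u^2" by (simp add: r_def)
    ultimately show ?thesis using \<open>(2*r)^2 \<le> (w - 1/w)^2\<close> by linarith
  qed
  show ?thesis
  proof (cases "z \<ge> 0")
    case True then show ?thesis by (rule main)
  next
    case False then show ?thesis using main[of "-z"] by (simp add: ch_def add.commute)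
  qed
qed



lemma kth_shift:
  assumes "1 \<le> k" "k \<le> N"
  shows "kth_largest N k (\<lambda>i. c + x i) = c + kth_largest N k x"
proof -
  have m: "map (\<lambda>i. c + x i) [0..<N] = map ((+) c) (map x [0..<N])" by simp
  have s: "sort (map ((+) c) xs) = map ((+) c) (sort xs)" for xs :: "real list"
    by (rule properties_for_sort) (auto intro: sorted_map_mono simp: mono_on_def)
  show ?thesis using assms
    by (simp add: kth_largest_def m s rev_map nth_map del: map_map)
qed

lemma kth_mem:
  assumes "1 \<le> k" "k \<le> N"
  shows "\<exists>i<N. kth_largest N k x = x i"
proof -
  have "kth_largest N k x \<in> set (rev (sort (map x [0..<N])))"
    unfolding kth_largest_def using assms by (intro nth_mem) auto
  then show ?thesis by auto
qed

lemma kth_ge: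
  assumes "1 \<le> k" "k \<le> N" "k \<le> card {i. i < N \<and> a \<le> x i}"
  shows "a \<le> kth_largest N k x"
proof (rule ccontr)
  define xs where "xs = map x [0..<N]"
  define ys where "ys = sort xs"
  have len: "length ys = N" by (simp add: ys_def xs_def)
  have eq: "kth_largest N k x = ys ! (N - k)"
    unfolding kth_largest_def xs_def[symmetric] ys_def[symmetric] using assms len
    by (subst rev_nth) (auto simp: Suc_diff_le)
  assume "\<not> a \<le> kth_largest N k x"
  hence lt: "ys ! (N - k) < a" using eq by simp
  have small: "ys ! m < a" if "m \<le> N - k" for m
  proof -
    have "ys ! m \<le> ys ! (N - k)"
      by (rule sorted_nth_mono) (use that assms len in \<open>auto simp: ys_def\<close>)
    then show ?thesis using lt by simp
  qed
  have "length (filter (\<lambda>v. a \<le> v) ys) = card {m. m < length ys \<and> a \<le> ys ! m}"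
    by (rule length_filter_conv_card)
  also have "\<dots> \<le> card {N - k + 1..<N}"
  proof (rule card_mono)
    show "{m. m < length ys \<and> a \<le> ys ! m} \<subseteq> {N - k + 1..<N}"
      using small len by (auto simp: not_less_eq_eq[symmetric]) (meson not_le not_less_eq_eq)
  qed auto
  also have "\<dots> = k - 1" using assms by simp
  finally have A: "length (filter (\<lambda>v. a \<le> v) ys) \<le> k - 1" .
  have "length (filter (\<lambda>v. a \<le> v) ys) = length (filter (\<lambda>v. a \<le> v) xs)"
    by (metis mset_filter mset_sort size_mset ys_def)
  also have "\<dots> = card {i. i < N \<and> a \<le> x i}"
    unfolding xs_def length_filter_conv_card by (intro arg_cong[where f=card]) auto
  finally show False using A assms by linarith
qed



definition Pj :: "(nat \<Rightarrow> real) \<Rightarrow> nat \<Rightarrow> real pmf" where "Pj \<sigma> j = pmf_of_set {- \<sigma> j, \<sigma> j}"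
definition Col :: "(nat \<Rightarrow> real) \<Rightarrow> nat \<Rightarrow> (nat \<Rightarrow> real) pmf" where "Col \<sigma> T = Pi_pmf {1..T} 0 (Pj \<sigma>)"
definition vs :: "nat \<Rightarrow> (nat \<Rightarrow> real) \<Rightarrow> real" where "vs T c = (\<Sum>j=1..T. - c j)"
definition Mg :: "(nat \<Rightarrow> real) \<Rightarrow> nat \<Rightarrow> real \<Rightarrow> real" where "Mg \<sigma> T \<theta> = (\<Prod>j=1..T. ch (\<theta> * \<sigma> j))"

lemma ch_pos: "ch z > 0" by (simp add: ch_def add_pos_pos)

lemma finite_Pj: "finite (set_pmf (Pj \<sigma> j))" by (simp add: Pj_def)

lemma finite_Col: "finite (set_pmf (Col \<sigma> T))"
  unfolding Col_def by (subst set_Pi_pmf) (auto simp: Pj_def intro!: finite_PiE_dflt)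

lemma integrable_Col [simp]: fixes f :: "_ \<Rightarrow> real" shows "integrable (measure_pmf (Col \<sigma> T)) f"
  by (rule integrable_measure_pmf_finite[OF finite_Col])

lemma exp_Pj:
  assumes "\<sigma> j > 0"
  shows "measure_pmf.expectation (Pj \<sigma> j) (\<lambda>v. exp (- \<theta> * v)) = ch (\<theta> * \<sigma> j)"
proof -
  have "- \<sigma> j \<noteq> \<sigma> j" using assms by simp
  then show ?thesis unfolding Pj_def
    by (subst integral_pmf_of_set) (auto simp: ch_def add.commute)
qed

lemma mgf:
  assumes "\<And>j. 1 \<le> j \<Longrightarrow> \<sigma> j > 0"
  shows "measure_pmf.expectation (Col \<sigma> T) (\<lambda>c. exp (\<theta> * vs T c)) = Mg \<sigma> T \<theta>"
proof -
  have "(\<lambda>c. exp (\<theta> * vs T c)) = (\<lambda>c. \<Prod>j\<in>{1..T}. exp (- \<theta> * c j))"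
    by (simp add: vs_def sum_distrib_left exp_sum)
  hence "measure_pmf.expectation (Col \<sigma> T) (\<lambda>c. exp (\<theta> * vs T c))
      = (\<Prod>j\<in>{1..T}. measure_pmf.expectation (Pj \<sigma> j) (\<lambda>v. exp (- \<theta> * v)))"
    unfolding Col_def
    by (simp only:) (rule expectation_prod_Pi_pmf, auto intro: integrable_measure_pmf_finite[OF finite_Pj])
  also have "\<dots> = Mg \<sigma> T \<theta>"
    unfolding Mg_def by (intro prod.cong refl exp_Pj assms) auto
  finally show ?thesis .
qed

lemma Mg_upper: "Mg \<sigma> T \<theta> \<le> exp (\<theta>^2 * (\<Sum>j=1..T. \<sigma> j ^ 2) / 2)"
proof -
  have "Mg \<sigma> T \<theta> \<le> (\<Prod>j=1..T. exp ((\<theta> * \<sigma> j)^2 / 2))"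
    unfolding Mg_def by (intro prod_mono) (auto simp: ch_le less_imp_le[OF ch_pos])
  also have "\<dots> = exp (\<Sum>j=1..T. (\<theta> * \<sigma> j)^2 / 2)" by (simp add: exp_sum)
  also have "(\<Sum>j=1..T. (\<theta> * \<sigma> j)^2 / 2) = \<theta>^2 * (\<Sum>j=1..T. \<sigma> j ^ 2) / 2"
    by (simp add: power_mult_distrib sum_distrib_left sum_divide_distrib)
  finally show ?thesis .
qed

lemma Mg_lower:
  assumes "\<And>j. j \<in> {1..T} \<Longrightarrow> (\<theta> * \<sigma> j)^2 / 2 \<le> 1"
  shows "exp (\<theta>^2 * (\<Sum>j=1..T. \<sigma> j ^ 2) / 2 - \<theta>^4 * (\<Sum>j=1..T. \<sigma> j ^ 4) / 4) \<le> Mg \<sigma> T \<theta>"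
proof -
  have one: "exp ((\<theta> * \<sigma> j)^2 / 2 - \<theta>^4 * \<sigma> j ^ 4 / 4) \<le> ch (\<theta> * \<sigma> j)" if j: "j \<in> {1..T}" for j
  proof -
    define x where "x = (\<theta> * \<sigma> j)^2 / 2"
    have x0: "0 \<le> x" and x1: "x \<le> 1" using assms[OF j] by (auto simp: x_def)
    have "x - x^2 \<le> ln (1 + x)" by (rule ln_one_plus_pos_lower_bound[OF x0 x1])
    hence A1: "exp (x - x^2) \<le> 1 + x" using x0
      by (metis add_pos_nonneg exp_le_cancel_iff exp_ln zero_less_one)
    have x2: "x^2 = \<theta>^4 * \<sigma> j ^ 4 / 4"
      by (simp add: x_def power_mult_distrib power2_eq_square power4_eq_xxxx)
    have A2: "1 + x \<le> ch (\<theta> * \<sigma> j)" using ch_ge by (simp add: x_def)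
    have e: "(\<theta>*\<sigma> j)^2/2 - \<theta>^4*\<sigma> j^4/4 = x - x^2" using x2 by (simp add: x_def)
    show ?thesis unfolding e using A1 A2 by (rule order_trans)
  qed
  have "exp (\<theta>^2 * (\<Sum>j=1..T. \<sigma> j ^ 2) / 2 - \<theta>^4 * (\<Sum>j=1..T. \<sigma> j ^ 4) / 4)
      = exp (\<Sum>j=1..T. (\<theta> * \<sigma> j)^2 / 2 - \<theta>^4 * \<sigma> j ^ 4 / 4)"
    by (simp add: power_mult_distrib sum_distrib_left sum_divide_distrib sum_subtractf)
  also have "\<dots> = (\<Prod>j=1..T. exp ((\<theta> * \<sigma> j)^2 / 2 - \<theta>^4 * \<sigma> j ^ 4 / 4))" by (simp add: exp_sum)
  also have "\<dots> \<le> Mg \<sigma> T \<theta>" unfolding Mg_def by (intro prod_mono) (auto intro: one)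
  finally show ?thesis .
qed

lemma tail_gen:
  assumes l: "l \<ge> 0" and m: "m \<ge> 0" and pos: "\<And>j. 1 \<le> j \<Longrightarrow> \<sigma> j > 0"
  shows "exp (- l * b) * (Mg \<sigma> T l - exp (m * a) * Mg \<sigma> T (l - m) - exp (- m * b) * Mg \<sigma> T (l + m))
     \<le> measure_pmf.expectation (Col \<sigma> T) (\<lambda>c. of_bool (a \<le> vs T c) :: real)"
proof -
  have pw: "exp (l * v) \<le> exp (m * a) * exp ((l - m) * v) + exp (l * b) * of_bool (a \<le> v)
              + exp (- m * b) * exp ((l + m) * v)" for v :: real
  proof -
    have n1: "0 \<le> exp (m * a) * exp ((l - m) * v)" by simp
    have n2: "0 \<le> exp (l * b) * of_bool (a \<le> v)" by simp
    have n3: "0 \<le> exp (- m * b) * exp ((l + m) * v)" by simp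
    consider "v < a" | "a \<le> v" "v \<le> b" | "b < v" by linarith
    then show ?thesis
    proof cases
      case 1
      have "m * v \<le> m * a" using 1 m by (intro mult_left_mono) auto
      hence "exp (l * v) \<le> exp (m * a) * exp ((l - m) * v)"
        unfolding exp_add[symmetric] by (intro exp_mono) (simp add: algebra_simps)
      then show ?thesis using n2 n3 by linarith
    next
      case 2
      have "exp (l * v) \<le> exp (l * b) * of_bool (a \<le> v)"
        using 2 l by (simp add: mult_left_mono)
      then show ?thesis using n1 n3 by linarith
    next
      case 3
      have "m * b \<le> m * v" using 3 m by (intro mult_left_mono) auto
      hence "exp (l * v) \<le> exp (- m * b) * exp ((l + m) * v)"
        unfolding exp_add[symmetric] by (intro exp_mono) (simp add: algebra_simps)
      then show ?thesis using n1 n2 by linarith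
    qed
  qed
  define E where "E = measure_pmf.expectation (Col \<sigma> T) (\<lambda>c. of_bool (a \<le> vs T c) :: real)"
  have "Mg \<sigma> T l = measure_pmf.expectation (Col \<sigma> T) (\<lambda>c. exp (l * vs T c))"
    by (simp add: mgf pos)
  also have "\<dots> \<le> measure_pmf.expectation (Col \<sigma> T) (\<lambda>c. exp (m * a) * exp ((l - m) * vs T c)
       + exp (l * b) * of_bool (a \<le> vs T c) + exp (- m * b) * exp ((l + m) * vs T c))"
    by (rule integral_mono, simp, simp, rule pw)
  also have "\<dots> = exp (m * a) * Mg \<sigma> T (l - m) + exp (l * b) * E + exp (- m * b) * Mg \<sigma> T (l + m)"
    by (simp add: E_def mgf pos)
  finally have "Mg \<sigma> T l - exp (m * a) * Mg \<sigma> T (l - m) - exp (- m * b) * Mg \<sigma> T (l + m) \<le> exp (l * b) * E"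
    by linarith
  hence "exp (- l * b) * (Mg \<sigma> T l - exp (m * a) * Mg \<sigma> T (l - m) - exp (- m * b) * Mg \<sigma> T (l + m))
      \<le> exp (- l * b) * (exp (l * b) * E)" by (intro mult_left_mono) auto
  also have "\<dots> = E" by (simp add: exp_minus field_simps)
  finally show ?thesis by (simp add: E_def)
qed



lemma exp_m2: "exp (-2::real) \<le> 1/5"
proof -
  have "5 \<le> exp (2::real)" using exp_lower_Taylor_quadratic[of 2] by simp
  then show ?thesis by (simp add: exp_minus inverse_eq_divide divide_le_eq_1 field_simps)
qed

lemma exp_half: "exp (1/2::real) \<le> 2"
proof (rule ccontr)
  assume "\<not> ?thesis"
  hence "2 * 2 < exp (1/2::real) * exp (1/2)" by (intro mult_strict_mono) auto
  also have "\<dots> = exp 1" by (simp flip: exp_add)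
  finally show False using exp_le by simp
qed

lemma tail:
  assumes pos: "\<And>j. 1 \<le> j \<Longrightarrow> \<sigma> j > 0" and le: "\<And>j. 1 \<le> j \<Longrightarrow> \<sigma> j \<le> B/2" and B: "B > 0"
    and y: "y \<ge> 0" and S2: "S2 = (\<Sum>j=1..T. \<sigma> j ^ 2)" and big: "y^4 * B^2 + y^2 * B^2 + 1 \<le> S2"
  shows "exp (- (y^2)/2 - 2 * y) / 2 \<le> measure_pmf.expectation (Col \<sigma> T) (\<lambda>c. of_bool ((y-2) * sqrt S2 \<le> vs T c) :: real)"
proof -
  define s where "s = sqrt S2"
  have y4: "0 \<le> y^4 * B^2" and y2: "0 \<le> y^2 * B^2" by simp_all
  have S2pos: "S2 > 0" using big y4 y2 by linarith
  have s: "s > 0" "s * s = S2" using S2pos by (simp_all add: s_def)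
  define l where "l = y/s"
  define m where "m = 2/s"
  define a where "a = (y-2) * s"
  define b where "b = (y+2) * s"
  have l0: "l \<ge> 0" using y s by (simp add: l_def)
  have m0: "m \<ge> 0" using s by (simp add: m_def)
  define K where "K = exp (y^2/2)"
  have K0: "K > 0" by (simp add: K_def)
  have tg: "exp (- l * b) * (Mg \<sigma> T l - exp (m * a) * Mg \<sigma> T (l - m) - exp (- m * b) * Mg \<sigma> T (l + m))
     \<le> measure_pmf.expectation (Col \<sigma> T) (\<lambda>c. of_bool (a \<le> vs T c) :: real)"
    by (rule tail_gen[OF l0 m0 pos])
  have U1: "exp (m * a) * Mg \<sigma> T (l - m) \<le> K * exp (-2)"
  proof -
    have "(l - m)^2 * S2 = (y - 2)^2" using s S2pos by (simp add: l_def m_def power2_eq_square field_simps)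
    hence "Mg \<sigma> T (l - m) \<le> exp ((y-2)^2/2)" using Mg_upper[of \<sigma> T "l - m"] S2 by simp
    hence "exp (m * a) * Mg \<sigma> T (l - m) \<le> exp (m * a) * exp ((y-2)^2/2)" by simp
    also have "\<dots> = K * exp (-2)" using s
      by (simp add: K_def m_def a_def flip: exp_add) (simp add: power2_eq_square field_simps)
    finally show ?thesis .
  qed
  have U2: "exp (- m * b) * Mg \<sigma> T (l + m) \<le> K * exp (-2)"
  proof -
    have "(l + m)^2 * S2 = (y + 2)^2" using s S2pos by (simp add: l_def m_def power2_eq_square field_simps)
    hence "Mg \<sigma> T (l + m) \<le> exp ((y+2)^2/2)" using Mg_upper[of \<sigma> T "l + m"] S2 by simp
    hence "exp (- m * b) * Mg \<sigma> T (l + m) \<le> exp (- m * b) * exp ((y+2)^2/2)" by simp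
    also have "\<dots> = K * exp (-2)" using s
      by (simp add: K_def m_def b_def flip: exp_add) (simp add: power2_eq_square field_simps)
    finally show ?thesis .
  qed
  have L: "K * exp (-1/16) \<le> Mg \<sigma> T l"
  proof -
    have sq: "\<sigma> j ^ 2 \<le> B^2/4" if "j \<in> {1..T}" for j
    proof -
      have "\<sigma> j ^ 2 \<le> (B/2)^2" using pos[of j] le[of j] that by (intro power_mono) auto
      then show ?thesis by (simp add: power2_eq_square)
    qed
    have cond: "(l * \<sigma> j)^2 / 2 \<le> 1" if j: "j \<in> {1..T}" for j
    proof -
      have "(l * \<sigma> j)^2 = y^2 * \<sigma> j^2 / S2" using s by (simp add: l_def power_mult_distrib power_divide power2_eq_square)
      also have "\<dots> \<le> y^2 * (B^2/4) / S2" using S2pos sq[OF j] by (intro divide_right_mono mult_left_mono) auto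
      also have "\<dots> \<le> 1"
      proof -
        have e: "y^2 * (B^2/4) = (y^2 * B^2)/4" by simp
        have h: "y^2 * (B^2/4) \<le> S2" unfolding e using big y4 y2 by linarith
        show ?thesis using h S2pos by (simp add: divide_le_eq_1)
      qed
      finally show ?thesis by simp
    qed
    have Q: "(\<Sum>j=1..T. \<sigma> j ^ 4) \<le> B^2/4 * S2"
    proof -
      have "(\<Sum>j=1..T. \<sigma> j ^ 4) \<le> (\<Sum>j=1..T. B^2/4 * \<sigma> j ^ 2)"
      proof (intro sum_mono)
        fix j assume "j \<in> {1..T}"
        then have "\<sigma> j ^ 2 * \<sigma> j ^ 2 \<le> B^2/4 * \<sigma> j ^ 2" using sq by (intro mult_right_mono) auto
        then show "\<sigma> j ^ 4 \<le> B^2/4 * \<sigma> j ^ 2" by (simp add: power4_eq_xxxx power2_eq_square mult.assoc)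
      qed
      also have "\<dots> = B^2/4 * S2" by (simp add: S2 sum_distrib_left)
      finally show ?thesis .
    qed
    have l2: "l^2 * S2 = y^2" using s S2pos by (simp add: l_def power2_eq_square field_simps)
    have l4: "l^4 * (\<Sum>j=1..T. \<sigma> j ^ 4) / 4 \<le> 1/16"
    proof -
      have "l^4 * (\<Sum>j=1..T. \<sigma> j ^ 4) / 4 \<le> l^4 * (B^2/4 * S2) / 4"
        using Q by (intro divide_right_mono mult_left_mono) auto
      also have "\<dots> = y^4 * B^2 / (16 * S2)" using s S2pos
        by (simp add: l_def power4_eq_xxxx field_simps)
      also have "\<dots> \<le> 1/16"
      proof -
        have h: "y^4 * B^2 \<le> S2" using big y2 by linarith
        show ?thesis using h S2pos by (simp add: field_simps)
      qed
      finally show ?thesis .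
    qed
    have "K * exp (-1/16) = exp (y^2/2 - 1/16)" by (simp add: K_def flip: exp_add)
    also have "\<dots> \<le> exp (l^2 * (\<Sum>j=1..T. \<sigma> j ^ 2) / 2 - l^4 * (\<Sum>j=1..T. \<sigma> j ^ 4) / 4)"
      using l4 l2 S2 by simp
    also have "\<dots> \<le> Mg \<sigma> T l" by (rule Mg_lower) (rule cond)
    finally show ?thesis .
  qed
  have c: "exp (-1/16::real) - 2 * exp (-2) \<ge> 1/2"
  proof -
    have "1 + (-1/16) \<le> exp (-1/16::real)" by (rule exp_ge_add_one_self)
    then show ?thesis using exp_m2 by linarith
  qed
  have "exp (- (y^2)/2 - 2 * y) / 2 = exp (- l * b) * K * (1/2)"
    using s by (simp add: K_def l_def b_def flip: exp_add) (simp add: power2_eq_square field_simps)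
  also have "\<dots> \<le> exp (- l * b) * K * (exp (-1/16) - 2 * exp (-2))"
    using c K0 by (intro mult_left_mono) auto
  also have "\<dots> = exp (- l * b) * (K * exp (-1/16) - K * exp (-2) - K * exp (-2))" by (simp add: algebra_simps)
  also have "\<dots> \<le> exp (- l * b) * (Mg \<sigma> T l - exp (m * a) * Mg \<sigma> T (l - m) - exp (- m * b) * Mg \<sigma> T (l + m))"
    using U1 U2 L by (intro mult_left_mono) auto
  also note tg
  finally show ?thesis by (simp add: a_def s_def)
qed

lemma second_moment:
  assumes pos: "\<And>j. 1 \<le> j \<Longrightarrow> \<sigma> j > 0" and S2: "S2 = (\<Sum>j=1..T. \<sigma> j ^ 2)" and S2pos: "S2 > 0"
  shows "measure_pmf.expectation (Col \<sigma> T) (\<lambda>c. (vs T c)^2) \<le> 4 * S2"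
proof -
  define s where "s = sqrt S2"
  have s: "s > 0" "s * s = S2" using S2pos by (simp_all add: s_def)
  have pw: "v^2 \<le> S2 * (exp ((1/s) * v) + exp ((-1/s) * v))" for v
  proof -
    have "1 + (v/s)^2/2 \<le> ch (v/s)" by (rule ch_ge)
    hence "(v/s)^2 \<le> exp (v/s) + exp (- (v/s))" by (simp add: ch_def)
    hence "S2 * (v/s)^2 \<le> S2 * (exp (v/s) + exp (- (v/s)))" using S2pos by (intro mult_left_mono) auto
    moreover have "S2 * (v/s)^2 = v^2" using s S2pos by (simp add: power2_eq_square field_simps)
    ultimately show ?thesis by simp
  qed
  have "measure_pmf.expectation (Col \<sigma> T) (\<lambda>c. (vs T c)^2)
     \<le> measure_pmf.expectation (Col \<sigma> T) (\<lambda>c. S2 * (exp ((1/s) * vs T c) + exp ((-1/s) * vs T c)))"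
    by (rule integral_mono, simp, simp, rule pw)
  also have "\<dots> = S2 * (measure_pmf.expectation (Col \<sigma> T) (\<lambda>c. exp ((1/s) * vs T c)) + measure_pmf.expectation (Col \<sigma> T) (\<lambda>c. exp ((-1/s) * vs T c)))"
    by (simp only: integral_mult_right_zero Bochner_Integration.integral_add[OF integrable_Col integrable_Col])
  also have "\<dots> = S2 * (Mg \<sigma> T (1/s) + Mg \<sigma> T (-1/s))"
    by (simp only: mgf[OF pos])
  also have "\<dots> \<le> S2 * (exp (1/2) + exp (1/2))"
  proof -
    have e: "(1/s)^2 * S2 / 2 = 1/2" "(-1/s)^2 * S2 / 2 = 1/2" using s S2pos by (simp_all add: power2_eq_square)
    show ?thesis using Mg_upper[of \<sigma> T "1/s"] Mg_upper[of \<sigma> T "-1/s"] S2pos unfolding S2[symmetric] e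
      by (intro mult_left_mono add_mono) auto
  qed
  also have "\<dots> \<le> 4 * S2" using exp_half S2pos by simp
  finally show ?thesis .
qed



lemma regroup:
  fixes N T :: nat
  shows "Pi_pmf ({1..T} \<times> {..<N}) 0 (\<lambda>(j,i). Pj \<sigma> j) =
   map_pmf (\<lambda>g (j,i). g i j) (Pi_pmf {..<N} (\<lambda>_. 0) (\<lambda>_. Col \<sigma> T))"
proof (rule pmf_eqI)
  fix h :: "nat \<times> nat \<Rightarrow> real"
  define F where "F = (\<lambda>(g::nat \<Rightarrow> nat \<Rightarrow> real) (j,i). g i j)"
  define G where "G = (\<lambda>(h::nat \<times> nat \<Rightarrow> real) i j. h (j,i))"
  have FG: "F (G h) = h" by (auto simp: F_def G_def)
  have injF: "inj F"
  proof (rule injI)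
    fix g g' assume "F g = F g'"
    then have "F g (j,i) = F g' (j,i)" for i j by simp
    then show "g = g'" by (auto simp: F_def fun_eq_iff)
  qed
  have "pmf (map_pmf F (Pi_pmf {..<N} (\<lambda>_. 0) (\<lambda>_. Col \<sigma> T))) h
      = pmf (Pi_pmf {..<N} (\<lambda>_. 0) (\<lambda>_. Col \<sigma> T)) (G h)"
    by (subst FG[symmetric], rule pmf_map_inj'[OF injF])
  also have "\<dots> = pmf (Pi_pmf ({1..T} \<times> {..<N}) 0 (\<lambda>(j,i). Pj \<sigma> j)) h"
  proof (cases "\<forall>z. z \<notin> {1..T} \<times> {..<N} \<longrightarrow> h z = 0")
    case True
    have "pmf (Pi_pmf {..<N} (\<lambda>_. 0) (\<lambda>_. Col \<sigma> T)) (G h) = (\<Prod>i<N. pmf (Col \<sigma> T) (G h i))"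
      using True by (subst pmf_Pi') (auto simp: G_def fun_eq_iff)
    also have "\<dots> = (\<Prod>i<N. \<Prod>j\<in>{1..T}. pmf (Pj \<sigma> j) (h (j,i)))"
      unfolding Col_def
    proof (intro prod.cong refl)
      fix i assume i: "i \<in> {..<N}"
      have z: "G h i j = 0" if "j \<notin> {1..T}" for j using True i that by (auto simp: G_def)
      show "pmf (Pi_pmf {1..T} 0 (Pj \<sigma>)) (G h i) = (\<Prod>j\<in>{1..T}. pmf (Pj \<sigma> j) (h (j,i)))"
        by (subst pmf_Pi'[OF _ z]) (auto simp: G_def)
    qed
    also have "\<dots> = (\<Prod>j\<in>{1..T}. \<Prod>i<N. pmf (Pj \<sigma> j) (h (j,i)))" by (rule prod.swap)
    also have "\<dots> = (\<Prod>z\<in>{1..T} \<times> {..<N}. pmf ((\<lambda>(j,i). Pj \<sigma> j) z) (h z))"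
      by (subst prod.cartesian_product) (auto simp: case_prod_beta)
    also have "\<dots> = pmf (Pi_pmf ({1..T} \<times> {..<N}) 0 (\<lambda>(j,i). Pj \<sigma> j)) h"
      by (rule pmf_Pi'[symmetric], simp, use True in blast)
    finally show ?thesis .
  next
    case False
    then obtain j i where ji: "(j,i) \<notin> {1..T} \<times> {..<N}" "h (j,i) \<noteq> 0" by auto
    have R: "pmf (Pi_pmf ({1..T} \<times> {..<N}) 0 (\<lambda>(j,i). Pj \<sigma> j)) h = 0"
      using False by (subst pmf_Pi) auto
    show ?thesis
    proof (cases "i < N")
      case False
      then have "G h i \<noteq> (\<lambda>_. 0)" using ji by (auto simp: G_def fun_eq_iff)
      then show ?thesis using R False by (subst pmf_Pi) auto
    next
      case True
      then have "j \<notin> {1..T}" using ji by auto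
      then have "pmf (Col \<sigma> T) (G h i) = 0" unfolding Col_def using ji
        by (subst pmf_Pi) (auto simp: G_def)
      then have "(\<Prod>i<N. pmf (Col \<sigma> T) (G h i)) = 0" using True
        by (subst prod_zero_iff) auto
      then show ?thesis using R by (subst pmf_Pi) auto
    qed
  qed
  finally show "pmf (Pi_pmf ({1..T} \<times> {..<N}) 0 (\<lambda>(j,i). Pj \<sigma> j)) h =
     pmf (map_pmf (\<lambda>g (j,i). g i j) (Pi_pmf {..<N} (\<lambda>_. 0) (\<lambda>_. Col \<sigma> T))) h"
    by (simp add: F_def)
qed

lemma chernoff:
  fixes C :: "'b pmf" and A :: "'b \<Rightarrow> bool" and d :: 'b
  assumes fin: "finite (set_pmf C)"
  shows "measure_pmf.expectation (Pi_pmf {..<N} d (\<lambda>_. C)) (\<lambda>g. of_bool (card {i. i < N \<and> A (g i)} < k) :: real)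
      \<le> exp (real k - real N * measure_pmf.expectation C (\<lambda>c. of_bool (A c)) / 2)"
proof -
  define q where "q = measure_pmf.expectation C (\<lambda>c. of_bool (A c) :: real)"
  have card: "real (card {i. i < N \<and> A (g i)}) = (\<Sum>i<N. of_bool (A (g i)))" for g
  proof -
    have "(\<Sum>i<N. of_bool (A (g i)) :: real) = (\<Sum>i\<in>{i. i < N \<and> A (g i)}. 1)"
      by (intro sum.mono_neutral_cong_right) auto
    thus ?thesis by simp
  qed
  have pw: "of_bool (card {i. i < N \<and> A (g i)} < k) \<le> exp (real k) * (\<Prod>i<N. exp (- of_bool (A (g i))))" for g
  proof -
    have "exp (- real (card {i. i < N \<and> A (g i)})) = exp (\<Sum>i<N. - of_bool (A (g i)) :: real)"
      by (simp add: card sum_negf)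
    also have "\<dots> = (\<Prod>i<N. exp (- of_bool (A (g i)) :: real))" by (simp add: exp_sum)
    finally have "(\<Prod>i<N. exp (- of_bool (A (g i)) :: real)) = exp (- real (card {i. i < N \<and> A (g i)}))" by simp
    moreover have "of_bool (card {i. i < N \<and> A (g i)} < k) \<le> exp (real k) * exp (- real (card {i. i < N \<and> A (g i)}))"
      by (auto simp flip: exp_add)
    ultimately show ?thesis by simp
  qed
  have finPi: "finite (set_pmf (Pi_pmf {..<N} d (\<lambda>_. C)))"
    by (subst set_Pi_pmf) (auto intro!: finite_PiE_dflt simp: fin)
  have "measure_pmf.expectation (Pi_pmf {..<N} d (\<lambda>_. C)) (\<lambda>g. of_bool (card {i. i < N \<and> A (g i)} < k) :: real)
     \<le> measure_pmf.expectation (Pi_pmf {..<N} d (\<lambda>_. C)) (\<lambda>g. exp (real k) * (\<Prod>i<N. exp (- of_bool (A (g i)))))"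
    by (rule integral_mono, rule integrable_measure_pmf_finite[OF finPi], rule integrable_measure_pmf_finite[OF finPi], rule pw)
  also have "\<dots> = exp (real k) * (\<Prod>i<N. measure_pmf.expectation C (\<lambda>c. exp (- of_bool (A c))))"
    by (subst integral_mult_right_zero, subst expectation_prod_Pi_pmf)
       (auto intro: integrable_measure_pmf_finite[OF fin])
  also have "\<dots> \<le> exp (real k) * (\<Prod>i<N. exp (- q / 2))"
  proof (intro mult_left_mono prod_mono conjI)
    fix i
    show "0 \<le> measure_pmf.expectation C (\<lambda>c. exp (- of_bool (A c)) :: real)" by simp
    have e1: "exp (-1::real) \<le> 1/2"
    proof -
      have "2 \<le> exp (1::real)" using exp_ge_add_one_self[of 1] by simp
      then show ?thesis by (simp add: exp_minus inverse_eq_divide field_simps)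
    qed
    have "measure_pmf.expectation C (\<lambda>c. exp (- of_bool (A c)) :: real)
        \<le> measure_pmf.expectation C (\<lambda>c. 1 - of_bool (A c) / 2)"
      by (rule integral_mono, rule integrable_measure_pmf_finite[OF fin], rule integrable_measure_pmf_finite[OF fin])
         (use e1 in auto)
    also have "\<dots> = 1 - q / 2"
      by (subst Bochner_Integration.integral_diff) (auto intro: integrable_measure_pmf_finite[OF fin] simp: q_def)
    also have "\<dots> \<le> exp (- q / 2)" using exp_ge_add_one_self[of "- q/2"] by simp
    finally show "measure_pmf.expectation C (\<lambda>c. exp (- of_bool (A c)) :: real) \<le> exp (- q / 2)" .
  qed auto
  also have "\<dots> = exp (real k - real N * q / 2)"
  proof -
    have "(\<Prod>i<N. exp (- q / 2)) = exp (- q / 2) ^ N" by simp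
    also have "\<dots> = exp (real N * (- q / 2))" by (rule exp_of_nat_mult[symmetric])
    finally have "(\<Prod>i<N. exp (- q / 2)) = exp (real N * (- q / 2))" .
    hence "exp (real k) * (\<Prod>i<N. exp (- q / 2)) = exp (real k) * exp (real N * (- q / 2))" by simp
    also have "\<dots> = exp (real k + real N * (- q / 2))" by (rule exp_add[symmetric])
    also have "real k + real N * (- q / 2) = real k - real N * q / 2" by simp
    finally show ?thesis .
  qed
  finally show ?thesis by (simp add: q_def)
qed

lemma indep_zero:
  fixes D :: "'a set" and P :: "'a \<Rightarrow> real pmf" and g :: "('a \<Rightarrow> real) \<Rightarrow> real"
  assumes D: "finite D" and x: "x \<in> D" and g: "\<And>f y. g (f(x := y)) = g f"
    and E0: "measure_pmf.expectation (P x) (\<lambda>y. y) = 0" and fin: "\<And>z. finite (set_pmf (P z))"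
  shows "measure_pmf.expectation (Pi_pmf D d P) (\<lambda>f. g f * f x) = 0"
proof -
  define Q where "Q = Pi_pmf (D - {x}) d P"
  have DD: "D = insert x (D - {x})" using x by auto
  have finQ: "finite (set_pmf Q)"
    unfolding Q_def by (subst set_Pi_pmf) (auto intro!: finite_PiE_dflt simp: fin D)
  have "Pi_pmf D d P = map_pmf (\<lambda>(y,f). f(x:=y)) (pair_pmf (P x) Q)"
    unfolding Q_def by (subst DD, subst Pi_pmf_insert) (use D in auto)
  hence "measure_pmf.expectation (Pi_pmf D d P) (\<lambda>f. g f * f x)
       = measure_pmf.expectation (pair_pmf (P x) Q) (\<lambda>z. g ((snd z)(x := fst z)) * fst z)"
    by (simp add: case_prod_beta)
  also have "\<dots> = measure_pmf.expectation (pair_pmf (P x) Q) (\<lambda>z. g (snd z) * fst z)"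
    by (simp add: g case_prod_beta)
  also have "\<dots> = (\<Sum>z\<in>set_pmf (P x) \<times> set_pmf Q. pmf (pair_pmf (P x) Q) z * (g (snd z) * fst z))"
    by (subst integral_measure_pmf[where A = "set_pmf (P x) \<times> set_pmf Q"]) (auto simp: fin finQ)
  also have "\<dots> = (\<Sum>y\<in>set_pmf (P x). \<Sum>f\<in>set_pmf Q. (pmf (P x) y * y) * (pmf Q f * g f))"
    by (subst sum.cartesian_product) (auto simp: pmf_pair intro!: sum.cong)
  also have "\<dots> = (\<Sum>y\<in>set_pmf (P x). pmf (P x) y * y) * (\<Sum>f\<in>set_pmf Q. pmf Q f * g f)"
    by (simp add: sum_product)
  also have "(\<Sum>y\<in>set_pmf (P x). pmf (P x) y * y) = measure_pmf.expectation (P x) (\<lambda>y. y)"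
    by (subst integral_measure_pmf[where A = "set_pmf (P x)"]) (auto simp: fin)
  finally show ?thesis using E0 by simp
qed



lemma abs_le_sq: fixes x \<theta> :: real assumes "\<theta> > 0" shows "\<bar>x\<bar> \<le> x^2 / (2*\<theta>) + \<theta>/2"
proof -
  have "0 \<le> (\<bar>x\<bar> - \<theta>)^2" by simp
  hence "2*\<theta>*\<bar>x\<bar> \<le> x^2 + \<theta>^2" by (simp add: power2_eq_square algebra_simps)
  hence "\<bar>x\<bar> \<le> (x^2 + \<theta>^2) / (2*\<theta>)" using assms by (simp add: field_simps)
  also have "\<dots> = x^2 / (2*\<theta>) + \<theta>/2" using assms by (simp add: field_simps power2_eq_square)
  finally show ?thesis .
qed

lemma kth_pw:
  assumes k: "1 \<le> k" "k \<le> N" and th: "\<theta> > 0"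
  shows "a - (a + \<theta>/2) * of_bool (card {i. i < N \<and> a \<le> x i} < k) - (\<Sum>i<N. (x i)^2 / (2*\<theta>)) \<le> kth_largest N k x"
proof (cases "card {i. i < N \<and> a \<le> x i} < k")
  case False
  have "a \<le> kth_largest N k x" using kth_ge[OF k] False by simp
  moreover have "0 \<le> (\<Sum>i<N. (x i)^2 / (2*\<theta>))" using th by (intro sum_nonneg) auto
  ultimately show ?thesis using False by simp
next
  case True
  obtain m where m: "m < N" "kth_largest N k x = x m" using kth_mem[OF k] by blast
  have "(x m)^2 / (2*\<theta>) \<le> (\<Sum>i<N. (x i)^2 / (2*\<theta>))"
    using m th by (intro member_le_sum) auto
  moreover have "\<bar>x m\<bar> \<le> (x m)^2 / (2*\<theta>) + \<theta>/2" by (rule abs_le_sq[OF th])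
  ultimately show ?thesis using True m by (simp add: algebra_simps)
qed

lemma ES0:
  assumes valid: "valid_algorithm N alg" and pos: "\<And>j. 1 \<le> j \<Longrightarrow> \<sigma> j > 0"
  shows "measure_pmf.expectation (Pi_pmf ({1..T} \<times> {..<N}) 0 (\<lambda>(j,i). Pj \<sigma> j))
           (\<lambda>L. \<Sum>j=1..T. \<Sum>k<N. alg j L k * L (j,k)) = 0"
proof -
  define \<Omega> where "\<Omega> = Pi_pmf ({1..T} \<times> {..<N}) 0 (\<lambda>(j,i). Pj \<sigma> j)"
  have fin\<Omega>: "finite (set_pmf \<Omega>)"
    unfolding \<Omega>_def by (subst set_Pi_pmf) (auto intro!: finite_PiE_dflt simp: Pj_def)
  have int: "integrable (measure_pmf \<Omega>) f" for f :: "_ \<Rightarrow> real"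
    by (rule integrable_measure_pmf_finite[OF fin\<Omega>])
  have zero: "measure_pmf.expectation \<Omega> (\<lambda>L. alg j L k * L (j,k)) = 0" if jk: "j \<in> {1..T}" "k < N" for j k
    unfolding \<Omega>_def
  proof (rule indep_zero)
    show "finite ({1..T} \<times> {..<N})" by simp
    show "(j,k) \<in> {1..T} \<times> {..<N}" using jk by simp
    show "alg j (f((j,k) := y)) k = alg j f k" for f y
    proof -
      have "\<forall>j'<j. \<forall>i. (f((j,k) := y)) (j', i) = f (j', i)" by auto
      then have "alg j (f((j,k) := y)) = alg j f" using valid unfolding valid_algorithm_def by blast
      then show ?thesis by simp
    qed
    have "\<sigma> j > 0" using pos jk by simp
    then show "measure_pmf.expectation ((\<lambda>(j,i). Pj \<sigma> j) (j,k)) (\<lambda>y. y) = 0"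
      by (simp add: Pj_def integral_pmf_of_set)
    show "finite (set_pmf ((\<lambda>(j,i). Pj \<sigma> j) z))" for z by (auto simp: Pj_def split: prod.splits)
  qed
  have "measure_pmf.expectation \<Omega> (\<lambda>L. \<Sum>j=1..T. \<Sum>k<N. alg j L k * L (j,k))
      = (\<Sum>j=1..T. \<Sum>k<N. measure_pmf.expectation \<Omega> (\<lambda>L. alg j L k * L (j,k)))"
    by (simp add: int Bochner_Integration.integral_sum)
  also have "\<dots> = 0" by (intro sum.neutral ballI) (auto simp: zero)
  finally show ?thesis by (simp add: \<Omega>_def)
qed

lemma exists_T:
  fixes \<sigma> :: "nat \<Rightarrow> real" and R :: real
  assumes ns: "\<not> summable (\<lambda>j. (\<sigma> j)^2)"
  shows "\<exists>T\<ge>1. R \<le> (\<Sum>j=1..T. \<sigma> j ^ 2)"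
proof (rule ccontr)
  assume na: "\<not> ?thesis"
  have lt: "(\<Sum>j=1..T. \<sigma> j ^ 2) < R" if T1: "T \<ge> 1" for T
  proof (rule ccontr)
    assume "\<not> (\<Sum>j=1..T. \<sigma> j ^ 2) < R"
    hence "R \<le> (\<Sum>j=1..T. \<sigma> j ^ 2)" by simp
    with T1 have "\<exists>T\<ge>1. R \<le> (\<Sum>j=1..T. \<sigma> j ^ 2)" by blast
    with na show False by blast
  qed
  have "summable (\<lambda>j. (\<sigma> j)^2)"
  proof (rule bounded_imp_summable)
    show "\<And>n. 0 \<le> (\<sigma> n)^2" by simp
    fix n
    show "(\<Sum>k\<le>n. (\<sigma> k)^2) \<le> (\<sigma> 0)^2 + \<bar>R\<bar>"
    proof (cases "n = 0")
      case True then show ?thesis by simp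
    next
      case False
      have "(\<Sum>k\<le>n. (\<sigma> k)^2) = (\<sigma> 0)^2 + (\<Sum>k=1..n. (\<sigma> k)^2)"
        by (simp add: atMost_atLeast0 sum.atLeast_Suc_atMost)
      also have "\<dots> \<le> (\<sigma> 0)^2 + \<bar>R\<bar>" using lt[of n] False by simp
      finally show ?thesis .
    qed
  qed
  with ns show False by simp
qed



lemma main_bound:
  fixes \<sigma> :: "nat \<Rightarrow> real" and B y S2 :: real and N T k :: nat
  assumes pos: "\<And>j. 1 \<le> j \<Longrightarrow> \<sigma> j > 0" and le: "\<And>j. 1 \<le> j \<Longrightarrow> \<sigma> j \<le> B/2" and B: "B > 0"
    and valid: "valid_algorithm N alg"
    and k: "1 \<le> k" "k \<le> N"
    and y: "y \<ge> 0" and S2: "S2 = (\<Sum>j=1..T. \<sigma> j ^ 2)" and big: "y^4 * B^2 + y^2 * B^2 + 1 \<le> S2"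
    and small: "(y + 3 + 2 * real N) * exp (real k - real N * (exp (- (y^2)/2 - 2 * y) / 2) / 2) \<le> 1/2"
  shows "(y - 3) * sqrt S2 \<le> measure_pmf.expectation (random_walk_losses \<sigma> N T) (\<lambda>L. kth_largest N k (regret_vec N alg T L))"
proof -
  define s where "s = sqrt S2"
  have y4: "0 \<le> y^4 * B^2" and y2: "0 \<le> y^2 * B^2" by simp_all
  have S2pos: "S2 > 0" using big y4 y2 by linarith
  have s: "s > 0" "s * s = S2" using S2pos by (simp_all add: s_def)
  have N1: "real N \<ge> 1" using k by simp
  define a where "a = (y - 2) * s"
  define \<theta> where "\<theta> = 4 * real N * s"
  have th: "\<theta> > 0" using N1 s by (simp add: \<theta>_def)
  define C where "C = Col \<sigma> T"
  define \<Omega>' where "\<Omega>' = Pi_pmf {..<N} (\<lambda>_. 0) (\<lambda>_. C)"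
  define \<Omega> where "\<Omega> = Pi_pmf ({1..T} \<times> {..<N}) 0 (\<lambda>(j,i). Pj \<sigma> j)"
  have \<Omega>eq: "random_walk_losses \<sigma> N T = \<Omega>" by (simp add: random_walk_losses_def \<Omega>_def Pj_def)
  have \<Omega>F: "\<Omega> = map_pmf (\<lambda>g (j,i). g i j) \<Omega>'" unfolding \<Omega>_def \<Omega>'_def C_def by (rule regroup)
  have fin\<Omega>: "finite (set_pmf \<Omega>)"
    unfolding \<Omega>_def by (subst set_Pi_pmf) (auto intro!: finite_PiE_dflt simp: Pj_def)
  have fin\<Omega>': "finite (set_pmf \<Omega>')"
    unfolding \<Omega>'_def C_def by (subst set_Pi_pmf) (auto intro!: finite_PiE_dflt simp: finite_Col)
  have int\<Omega>: "integrable (measure_pmf \<Omega>) f" for f :: "_ \<Rightarrow> real"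
    by (rule integrable_measure_pmf_finite[OF fin\<Omega>])
  have int\<Omega>': "integrable (measure_pmf \<Omega>') f" for f :: "_ \<Rightarrow> real"
    by (rule integrable_measure_pmf_finite[OF fin\<Omega>'])
  define ql where "ql = exp (- (y^2)/2 - 2 * y) / 2"
  define q where "q = measure_pmf.expectation C (\<lambda>c. of_bool (a \<le> vs T c) :: real)"
  define Pf where "Pf = measure_pmf.expectation \<Omega>' (\<lambda>g. of_bool (card {i. i < N \<and> a \<le> vs T (g i)} < k) :: real)"
  have q: "ql \<le> q"
    unfolding q_def C_def a_def s_def ql_def by (rule tail[OF pos le B y S2 big])
  have Pf1: "Pf \<le> exp (real k - real N * q / 2)"
    unfolding Pf_def q_def \<Omega>'_def C_def by (rule chernoff[OF finite_Col])
  have "real N * ql \<le> real N * q" using q by (intro mult_left_mono) auto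
  hence "exp (real k - real N * q / 2) \<le> exp (real k - real N * ql / 2)" by simp
  hence Pf2: "Pf \<le> exp (real k - real N * ql / 2)" using Pf1 by linarith
  have Pf0: "0 \<le> Pf" unfolding Pf_def by simp
  have mom: "measure_pmf.expectation \<Omega>' (\<lambda>g. (vs T (g i))^2) \<le> 4 * S2" if i: "i < N" for i
  proof -
    have "map_pmf (\<lambda>g. g i) \<Omega>' = C" unfolding \<Omega>'_def using i by (subst Pi_pmf_component) auto
    hence "measure_pmf.expectation \<Omega>' (\<lambda>g. (vs T (g i))^2) = measure_pmf.expectation C (\<lambda>c. (vs T c)^2)"
    proof -
      have "measure_pmf.expectation (map_pmf (\<lambda>g. g i) \<Omega>') (\<lambda>c. (vs T c)^2) = measure_pmf.expectation \<Omega>' (\<lambda>g. (vs T (g i))^2)"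
        by simp
      then show ?thesis using \<open>map_pmf (\<lambda>g. g i) \<Omega>' = C\<close> by simp
    qed
    also have "\<dots> \<le> 4 * S2" unfolding C_def by (rule second_moment[OF pos S2 S2pos])
    finally show ?thesis .
  qed
  have kthE: "a - (a + \<theta>/2) * Pf - (\<Sum>i<N. measure_pmf.expectation \<Omega>' (\<lambda>g. (vs T (g i))^2) / (2*\<theta>))
      \<le> measure_pmf.expectation \<Omega>' (\<lambda>g. kth_largest N k (\<lambda>i. vs T (g i)))"
  proof -
    have "measure_pmf.expectation \<Omega>' (\<lambda>g. a - (a + \<theta>/2) * of_bool (card {i. i < N \<and> a \<le> vs T (g i)} < k) - (\<Sum>i<N. (vs T (g i))^2 / (2*\<theta>)))
        \<le> measure_pmf.expectation \<Omega>' (\<lambda>g. kth_largest N k (\<lambda>i. vs T (g i)))"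
      by (rule integral_mono, rule int\<Omega>', rule int\<Omega>', rule kth_pw[OF k th])
    moreover have "measure_pmf.expectation \<Omega>' (\<lambda>g. a - (a + \<theta>/2) * of_bool (card {i. i < N \<and> a \<le> vs T (g i)} < k) - (\<Sum>i<N. (vs T (g i))^2 / (2*\<theta>)))
        = a - (a + \<theta>/2) * Pf - (\<Sum>i<N. measure_pmf.expectation \<Omega>' (\<lambda>g. (vs T (g i))^2) / (2*\<theta>))"
    proof -
      define c where "c = a + \<theta>/2"
      have L1: "measure_pmf.expectation \<Omega>' (\<lambda>g. a - c * of_bool (card {i. i < N \<and> a \<le> vs T (g i)} < k) - (\<Sum>i<N. (vs T (g i))^2 / (2*\<theta>)))
          = measure_pmf.expectation \<Omega>' (\<lambda>g. a - c * of_bool (card {i. i < N \<and> a \<le> vs T (g i)} < k)) - measure_pmf.expectation \<Omega>' (\<lambda>g. \<Sum>i<N. (vs T (g i))^2 / (2*\<theta>))"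
        by (rule Bochner_Integration.integral_diff[OF int\<Omega>' int\<Omega>'])
      have L2: "measure_pmf.expectation \<Omega>' (\<lambda>g. a - c * of_bool (card {i. i < N \<and> a \<le> vs T (g i)} < k))
          = measure_pmf.expectation \<Omega>' (\<lambda>g. a) - measure_pmf.expectation \<Omega>' (\<lambda>g. c * of_bool (card {i. i < N \<and> a \<le> vs T (g i)} < k))"
        by (rule Bochner_Integration.integral_diff[OF int\<Omega>' int\<Omega>'])
      have L3: "measure_pmf.expectation \<Omega>' (\<lambda>g. a) = a" by simp
      have L4: "measure_pmf.expectation \<Omega>' (\<lambda>g. c * of_bool (card {i. i < N \<and> a \<le> vs T (g i)} < k)) = c * Pf"
        unfolding Pf_def by (rule integral_mult_right_zero)
      have L5: "measure_pmf.expectation \<Omega>' (\<lambda>g. \<Sum>i<N. (vs T (g i))^2 / (2*\<theta>))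
          = (\<Sum>i<N. measure_pmf.expectation \<Omega>' (\<lambda>g. (vs T (g i))^2 / (2*\<theta>)))"
        by (rule Bochner_Integration.integral_sum, rule int\<Omega>')
      have L6: "measure_pmf.expectation \<Omega>' (\<lambda>g. (vs T (g i))^2 / (2*\<theta>)) = measure_pmf.expectation \<Omega>' (\<lambda>g. (vs T (g i))^2) / (2*\<theta>)" for i
        by (rule integral_divide_zero)
      show ?thesis unfolding c_def[symmetric] L1 L2 L3 L4 L5 L6 ..
    qed
    ultimately show ?thesis by simp
  qed
  have sumb: "(\<Sum>i<N. measure_pmf.expectation \<Omega>' (\<lambda>g. (vs T (g i))^2) / (2*\<theta>)) \<le> s/2"
  proof -
    have "(\<Sum>i<N. measure_pmf.expectation \<Omega>' (\<lambda>g. (vs T (g i))^2) / (2*\<theta>)) \<le> (\<Sum>i<N. 4 * S2 / (2*\<theta>))"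
      using th by (intro sum_mono divide_right_mono mom) auto
    also have "\<dots> = real N * (4 * S2) / (2*\<theta>)" by simp
    also have "\<dots> = s/2" using s N1 by (simp add: \<theta>_def field_simps)
    finally show ?thesis .
  qed
  have PfB: "(a + \<theta>/2) * Pf \<le> s/2"
  proof -
    have "a + \<theta>/2 \<le> (y + 3 + 2 * real N) * s" using s by (simp add: a_def \<theta>_def algebra_simps)
    hence "(a + \<theta>/2) * Pf \<le> (y + 3 + 2 * real N) * s * Pf" using Pf0 by (intro mult_right_mono) auto
    also have "\<dots> = s * ((y + 3 + 2 * real N) * Pf)" by simp
    also have "\<dots> \<le> s * ((y + 3 + 2 * real N) * exp (real k - real N * ql / 2))"
      using Pf2 s y by (intro mult_left_mono) auto
    also have "\<dots> \<le> s * (1/2)" using small s by (intro mult_left_mono) (auto simp: ql_def)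
    finally show ?thesis by simp
  qed
  have E': "(y - 3) * s \<le> measure_pmf.expectation \<Omega>' (\<lambda>g. kth_largest N k (\<lambda>i. vs T (g i)))"
    using kthE sumb PfB by (simp add: a_def algebra_simps)
  define Sf where "Sf = (\<lambda>L::nat \<times> nat \<Rightarrow> real. \<Sum>j=1..T. \<Sum>k<N. alg j L k * L (j,k))"
  have rv: "regret_vec N alg T L = (\<lambda>i. Sf L + vs T (\<lambda>j. L (j,i)))" for L
  proof (rule ext)
    fix i
    have "regret_vec N alg T L i = (\<Sum>j=1..T. \<Sum>k<N. alg j L k * L (j,k)) - (\<Sum>j=1..T. L (j,i))"
      unfolding regret_vec_def by (rule sum_subtractf)
    also have "\<dots> = Sf L + vs T (\<lambda>j. L (j,i))" unfolding Sf_def vs_def by (simp add: sum_negf)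
    finally show "regret_vec N alg T L i = Sf L + vs T (\<lambda>j. L (j,i))" .
  qed
  have kk: "kth_largest N k (regret_vec N alg T L) = Sf L + kth_largest N k (\<lambda>i. vs T (\<lambda>j. L (j,i)))" for L
    unfolding rv by (rule kth_shift[OF k])
  have "measure_pmf.expectation \<Omega> (\<lambda>L. kth_largest N k (regret_vec N alg T L))
      = measure_pmf.expectation \<Omega> Sf + measure_pmf.expectation \<Omega> (\<lambda>L. kth_largest N k (\<lambda>i. vs T (\<lambda>j. L (j,i))))"
    unfolding kk by (rule Bochner_Integration.integral_add[OF int\<Omega> int\<Omega>])
  also have "measure_pmf.expectation \<Omega> Sf = 0"
    unfolding \<Omega>_def Sf_def by (rule ES0[OF valid pos])
  also have "measure_pmf.expectation \<Omega> (\<lambda>L. kth_largest N k (\<lambda>i. vs T (\<lambda>j. L (j,i))))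
      = measure_pmf.expectation \<Omega>' (\<lambda>g. kth_largest N k (\<lambda>i. vs T (g i)))"
    unfolding \<Omega>F by simp
  finally show ?thesis using E' \<Omega>eq by (simp add: s_def)
qed



lemma numeric:
  fixes \<epsilon> :: real
  assumes e: "0 < \<epsilon>" "\<epsilon> < 1/1000"
  defines "u \<equiv> 1/\<epsilon>"
  defines "t \<equiv> sqrt (2 * ln (1/\<epsilon>))"
  shows "3 \<le> t" "t \<le> u" "exp (- (t^2)/2) = \<epsilon>" "u > 1000"
proof -
  show u: "u > 1000" using e by (simp add: u_def field_simps)
  have lnpos: "ln u > 0" using u by simp
  have t2: "t^2 = 2 * ln u" using lnpos by (simp add: t_def u_def)
  show "exp (- (t^2)/2) = \<epsilon>" using t2 u e by (simp add: exp_minus u_def)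
  have "exp (5::real) = exp 1 ^ 5" using exp_of_nat_mult[of 5 "1::real"] by simp
  also have "\<dots> \<le> 3 ^ 5" by (rule power_mono[OF exp_le]) simp
  finally have "exp (5::real) < u" using u by simp
  hence "ln (exp 5) < ln u" using u by (subst ln_less_cancel_iff) auto
  hence "5 < ln u" by simp
  hence "3^2 \<le> 2 * ln u" by simp
  then show "3 \<le> t" unfolding t_def u_def by (intro real_le_rsqrt) simp
  have "ln u \<le> u - 1" using u by (intro ln_le_minus_one) simp
  moreover have "2 * u \<le> u * u" using u by (intro mult_right_mono) auto
  ultimately have "2 * ln u \<le> u^2" by (simp add: power2_eq_square)
  then show "t \<le> u" unfolding t_def u_def using u e by (intro real_le_lsqrt) (auto simp: u_def)
qed

theorem theorem4p3:
  fixes B :: real and \<sigma> :: "nat \<Rightarrow> real"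
  assumes "B > 0"
    and "\<And>j. j \<ge> 1 \<Longrightarrow> \<sigma> j > 0"
    and "\<And>j. j \<ge> 1 \<Longrightarrow> \<sigma> j \<le> B / 2"
    and "\<not> summable (\<lambda>j. (\<sigma> j)^2)"
  shows "\<exists>\<epsilon>0 > 0. \<exists>c1 > 0. \<exists>c2 > 0. \<forall>\<epsilon>. 0 < \<epsilon> \<and> \<epsilon> < \<epsilon>0 \<longrightarrow>
           (\<exists>N T::nat. c1 / \<epsilon>^2 \<le> real N \<and> real N \<le> c2 / \<epsilon>^2 \<and> T \<ge> 1 \<and>
              (\<forall>alg. valid_algorithm N alg \<longrightarrow>
                 measure_pmf.expectation (random_walk_losses \<sigma> N T) (regret_eps N alg T \<epsilon>)
                   / sqrt (\<Sum>j=1..T. (\<sigma> j)^2)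
                 \<ge> sqrt (2 * ln (1 / \<epsilon>)) - 6))"
proof -
  note B = assms(1) and pos = assms(2) and le = assms(3) and ns = assms(4)
  have main: "\<exists>N T::nat. 1 / \<epsilon>^2 \<le> real N \<and> real N \<le> 2 / \<epsilon>^2 \<and> T \<ge> 1 \<and>
              (\<forall>alg. valid_algorithm N alg \<longrightarrow>
                 measure_pmf.expectation (random_walk_losses \<sigma> N T) (regret_eps N alg T \<epsilon>)
                   / sqrt (\<Sum>j=1..T. (\<sigma> j)^2)
                 \<ge> sqrt (2 * ln (1 / \<epsilon>)) - 6)" if e: "0 < \<epsilon> \<and> \<epsilon> < 1/1000" for \<epsilon> :: real
  proof -
    have e0: "0 < \<epsilon>" and e1: "\<epsilon> < 1/1000" using e by auto
    define u where "u = 1/\<epsilon>"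
    define t where "t = sqrt (2 * ln (1/\<epsilon>))"
    have t3: "3 \<le> t" and tu: "t \<le> u" and et: "exp (- (t^2)/2) = \<epsilon>" and u1000: "u > 1000"
      using numeric[OF e0 e1] by (simp_all add: t_def u_def)
    have ue: "u * \<epsilon> = 1" using e0 by (simp add: u_def)
    define N where "N = nat \<lceil>u^2\<rceil>"
    have N1: "u^2 \<le> real N" unfolding N_def by (rule real_nat_ceiling_ge)
    have c0: "(0::int) \<le> \<lceil>u^2\<rceil>" by (metis ceiling_mono ceiling_zero zero_le_power2)
    have "real N = of_int \<lceil>u^2\<rceil>" unfolding N_def by (rule of_nat_nat[OF c0])
    hence N2: "real N \<le> u^2 + 1" using ceiling_correct[of "u^2"] by linarith
    have ueq: "1 / \<epsilon>^2 = u^2" by (simp add: u_def power_divide)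
    have uu: "u \<le> u^2" using u1000 by (simp add: power2_eq_square)
    have u2: "1 \<le> u^2" using u1000 uu by linarith
    have N3: "real N \<le> 2 / \<epsilon>^2" using N2 u2 ueq by simp
    have Ne: "u \<le> real N * \<epsilon>"
    proof -
      have "u^2 * \<epsilon> \<le> real N * \<epsilon>" using N1 e0 by (intro mult_right_mono) auto
      moreover have "u^2 * \<epsilon> = u" using ue by (simp add: power2_eq_square)
      ultimately show ?thesis by simp
    qed
    define k where "k = nat \<lfloor>real N * \<epsilon>\<rfloor>"
    have kle: "real k \<le> real N * \<epsilon>" unfolding k_def using e0 by (intro of_nat_floor) simp
    have k1: "1 \<le> k" unfolding k_def using Ne u1000 by (intro le_nat_floor) simp
    have "real N * \<epsilon> \<le> real N" using e1 by (simp add: mult_left_le)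
    hence kN: "k \<le> N" using kle by linarith
    define y where "y = t - 3"
    have y0: "y \<ge> 0" using t3 by (simp add: y_def)
    obtain T where T1: "T \<ge> 1" and big: "y^4 * B^2 + y^2 * B^2 + 1 \<le> (\<Sum>j=1..T. \<sigma> j ^ 2)"
      using exists_T[OF ns] by blast
    have small: "(y + 3 + 2 * real N) * exp (real k - real N * (exp (- (y^2)/2 - 2 * y) / 2) / 2) \<le> 1/2"
    proof -
      have ex: "exp (- (y^2)/2 - 2 * y) = \<epsilon> * exp (t + 3/2)"
      proof -
        have eq: "- (y^2)/2 - 2 * y = - (t^2)/2 + (t + 3/2)" by (simp add: y_def power2_eq_square field_simps)
        have "exp (- (y^2)/2 - 2 * y) = exp (- (t^2)/2 + (t + 3/2))" by (simp only: eq)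
        also have "\<dots> = exp (- (t^2)/2) * exp (t + 3/2)" by (rule exp_add)
        also have "\<dots> = \<epsilon> * exp (t + 3/2)" by (simp only: et)
        finally show ?thesis .
      qed
      have e8: "8 \<le> exp (t + 3/2)"
      proof -
        have "1 + 3 + 3^2/2 \<le> exp (3::real)" by (rule exp_lower_Taylor_quadratic) simp
        also have "\<dots> \<le> exp (t + 3/2)" using t3 by simp
        finally show ?thesis by simp
      qed
      have ql: "4 * \<epsilon> \<le> exp (- (y^2)/2 - 2 * y) / 2" unfolding ex using e8 e0 by simp
      have "real N * (4 * \<epsilon>) \<le> real N * (exp (- (y^2)/2 - 2 * y) / 2)" using ql by (intro mult_left_mono) auto
      hence ex2: "real k - real N * (exp (- (y^2)/2 - 2 * y) / 2) / 2 \<le> - u" using kle Ne by linarith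
      have A: "exp (real k - real N * (exp (- (y^2)/2 - 2 * y) / 2) / 2) \<le> exp (- u)" using ex2 by simp
      have Bd: "y + 3 + 2 * real N \<le> 5 * u^2" using tu N2 uu u2 by (simp add: y_def)
      have C: "5 * u^2 * exp (- u) \<le> 1/2"
      proof -
        have "exp u = exp (u/3) ^ 3" using exp_of_nat_mult[of 3 "u/3"] by simp
        moreover have "(u/3)^3 \<le> exp (u/3) ^ 3"
        proof (rule power_mono)
          show "u/3 \<le> exp (u/3)" using exp_ge_add_one_self[of "u/3"] by linarith
          show "0 \<le> u/3" using u1000 by simp
        qed
        ultimately have eu: "u^3 / 27 \<le> exp u" by (simp add: power_divide)
        have "10 * u^2 * 27 \<le> u^3" using u1000 by (simp add: power2_eq_square power3_eq_cube mult_right_mono)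
        hence "10 * u^2 \<le> exp u" using eu by linarith
        hence "5 * u^2 \<le> exp u / 2" by simp
        hence "5 * u^2 * exp (- u) \<le> exp u / 2 * exp (- u)" by (intro mult_right_mono) auto
        also have "\<dots> = 1/2" by (simp add: exp_minus)
        finally show ?thesis .
      qed
      have "(y + 3 + 2 * real N) * exp (real k - real N * (exp (- (y^2)/2 - 2 * y) / 2) / 2) \<le> 5 * u^2 * exp (- u)"
        using A Bd y0 by (intro mult_mono) auto
      with C show ?thesis by linarith
    qed
    have S2pos: "0 < (\<Sum>j=1..T. \<sigma> j ^ 2)"
    proof -
      have "0 \<le> y^4 * B^2" "0 \<le> y^2 * B^2" by simp_all
      then show ?thesis using big by linarith
    qed
    show ?thesis
    proof (intro exI conjI allI impI)
      show "1 / \<epsilon>^2 \<le> real N" using N1 ueq by simp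
      show "real N \<le> 2 / \<epsilon>^2" by (rule N3)
      show "1 \<le> T" by (rule T1)
      fix alg assume valid: "valid_algorithm N alg"
      have re: "regret_eps N alg T \<epsilon> = (\<lambda>L. kth_largest N k (regret_vec N alg T L))"
        by (simp add: fun_eq_iff regret_eps_def k_def)
      have "(y - 3) * sqrt (\<Sum>j=1..T. \<sigma> j ^ 2) \<le> measure_pmf.expectation (random_walk_losses \<sigma> N T) (\<lambda>L. kth_largest N k (regret_vec N alg T L))"
        by (rule main_bound[OF pos le B valid k1 kN y0 refl big small])
      hence "y - 3 \<le> measure_pmf.expectation (random_walk_losses \<sigma> N T) (regret_eps N alg T \<epsilon>) / sqrt (\<Sum>j=1..T. \<sigma> j ^ 2)"
        unfolding re using S2pos by (simp add: pos_le_divide_eq)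
      then show "sqrt (2 * ln (1 / \<epsilon>)) - 6 \<le> measure_pmf.expectation (random_walk_losses \<sigma> N T) (regret_eps N alg T \<epsilon>) / sqrt (\<Sum>j=1..T. (\<sigma> j)^2)"
        by (simp add: y_def t_def)
    qed
  qed
  show ?thesis
    apply (rule exI[where x="1/1000::real"], rule conjI, simp)
    apply (rule exI[where x="1::real"], rule conjI, simp)
    apply (rule exI[where x="2::real"], rule conjI, simp)
    using main by blast
qed


end
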